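(* Let $\mathfrak{S}=(\mathcal{X},\mathsf{S},\gamma,(\Lambda_{a})_{a\in\mathcal{A}})$ be a spectral decomposition system for the Euclidean space $\mathfrak{H}$ and let $\varphi\colon\mathcal{X}\to[-\infty,+\infty]$ be $\mathsf{S}$-invariant. Then: (i) $\overline{\varphi\circ\gamma}=\overline{\varphi}\circ\gamma$; (ii) for every $X\in\mathfrak{H}$, $\varphi\circ\gamma$ is lower semicontinuous at $X$ if and only if $\varphi$ is lower semicontinuous at $\gamma(X)$; (iii) $\varphi\circ\gamma$ is lower semicontinuous if and only if $\varphi$ is lower semicontinuous.
   Context: A Euclidean space is a finite-dimensional real inner product space; inner products are written $\langle\cdot,\cdot\rangle$ and norms $\|\cdot\|$. Let $\mathfrak{H}$ and $\mathcal{X}$ be Euclidean spaces, let $\mathsf{S}$ be a group acting on $\mathcal{X}$ by linear isometries, let $\gamma\colon\mathfrak{H}\to\mathcal{X}$, and let $(\Lambda_a)_{a\in\mathcal{A}}$ be a family of linear operators from $\mathcal{X}$ to $\mathfrak{H}$. The orbit of $x$ is $\mathsf{S}\cdot x=\{s\cdot x: s\in\mathsf{S}\}$; a map $f$ on $\mathcal{X}$ is $\mathsf{S}$-invariant if $f(s\cdot x)=f(x)$ for all $s,x$. The tuple is a spectral decomposition system for $\mathfrak{H}$ if: [A] every $\Lambda_a$ is an isometry; [B] there exists an $\mathsf{S}$-invariant $\tau\colon\mathcal{X}\to\mathcal{X}$ with $\tau(x)\in\mathsf{S}\cdot x$ for all $x$ and $\gamma\circ\Lambda_a=\tau$ for all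 $a$; [C] for every $X\in\mathfrak{H}$ there is $a$ with $X=\Lambda_a\gamma(X)$; [D] $\langle X,Y\rangle\leq\langle\gamma(X),\gamma(Y)\rangle$ for all $X,Y\in\mathfrak{H}$. For a function $f\colon\mathcal{H}\to[-\infty,+\infty]$, $\overline{f}$ denotes its lower semicontinuous envelope, i.e. the pointwise supremum of all lower semicontinuous functions $g\colon\mathcal{H}\to[-\infty,+\infty]$ with $g\leq f$. *)

theory Defs
  imports "HOL-Analysis.Analysis"
begin

text \<open>A group of linear isometries of 'x, represented concretely as a set of maps
  (the action s . x is function application s x).\<close>
definition linear_isometry_group :: "('x::euclidean_space \<Rightarrow> 'x) set \<Rightarrow> bool" where
  "linear_isometry_group S \<longleftrightarrow>
     id \<in> S \<and> (\<forall>s\<in>S. \<forall>t\<in>S. s \<circ> t \<in> S) \<and>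
     (\<forall>s\<in>S. \<exists>t\<in>S. s \<circ> t = id \<and> t \<circ> s = id) \<and>
     (\<forall>s\<in>S. linear s \<and> (\<forall>x. norm (s x) = norm x))"

definition orbit :: "('x \<Rightarrow> 'x) set \<Rightarrow> 'x \<Rightarrow> 'x set" where
  "orbit S x = (\<lambda>s. s x) ` S"

definition S_invariant :: "('x \<Rightarrow> 'x) set \<Rightarrow> ('x \<Rightarrow> 'b) \<Rightarrow> bool" where
  "S_invariant S f \<longleftrightarrow> (\<forall>s\<in>S. \<forall>x. f (s x) = f x)"

definition spectral_decomposition_system ::
  "('x::euclidean_space \<Rightarrow> 'x) set \<Rightarrow> ('h::euclidean_space \<Rightarrow> 'x) \<Rightarrow> 'a set \<Rightarrow> ('a \<Rightarrow> 'x \<Rightarrow> 'h) \<Rightarrow> bool" where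
  "spectral_decomposition_system S \<gamma> A \<Lambda> \<longleftrightarrow>
     linear_isometry_group S \<and>
     (\<forall>a\<in>A. linear (\<Lambda> a) \<and> (\<forall>x. norm (\<Lambda> a x) = norm x)) \<and>
     (\<exists>\<tau>. S_invariant S \<tau> \<and> (\<forall>x. \<tau> x \<in> orbit S x) \<and> (\<forall>a\<in>A. \<gamma> \<circ> \<Lambda> a = \<tau>)) \<and>
     (\<forall>X. \<exists>a\<in>A. X = \<Lambda> a (\<gamma> X)) \<and>
     (\<forall>X Y. inner X Y \<le> inner (\<gamma> X) (\<gamma> Y))"

definition lsc_at :: "('x::topological_space \<Rightarrow> ereal) \<Rightarrow> 'x \<Rightarrow> bool" where
  "lsc_at f x \<longleftrightarrow> (\<forall>t. t < f x \<longrightarrow> (\<forall>\<^sub>F y in nhds x. t < f y))"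

definition lsc :: "('x::topological_space \<Rightarrow> ereal) \<Rightarrow> bool" where
  "lsc f \<longleftrightarrow> (\<forall>x. lsc_at f x)"

definition lsc_envelope :: "('x::topological_space \<Rightarrow> ereal) \<Rightarrow> 'x \<Rightarrow> ereal" where
  "lsc_envelope f x = (SUP g \<in> {g. lsc g \<and> (\<forall>y. g y \<le> f y)}. g x)"

end

theory Submission
  imports Defs
begin

lemma lsc_at_comp:
  assumes "lsc_at f (g x)" and "isCont g x"
  shows "lsc_at (f \<circ> g) x"
  unfolding lsc_at_def
proof (intro allI impI)
  fix t assume "t < (f \<circ> g) x"
  then have "\<forall>\<^sub>F y in nhds (g x). t < f y" using assms(1) unfolding lsc_at_def by simp
  moreover have "filterlim g (nhds (g x)) (nhds x)"
    using assms(2) by (metis isCont_def tendsto_at_iff_tendsto_nhds)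
  ultimately show "\<forall>\<^sub>F y in nhds x. t < (f \<circ> g) y"
    unfolding comp_def by (rule eventually_compose_filterlim)
qed

lemma lsc_comp:
  assumes "lsc f" and "\<And>x. isCont g x"
  shows "lsc (f \<circ> g)"
  using assms lsc_at_comp unfolding lsc_def by blast

lemma gamma_lip:
  fixes \<gamma> :: "'h::euclidean_space \<Rightarrow> 'x::euclidean_space"
  assumes nm: "\<And>X. norm (\<gamma> X) = norm X"
    and ip: "\<And>X Y. inner X Y \<le> inner (\<gamma> X) (\<gamma> Y)"
  shows "dist (\<gamma> X) (\<gamma> Y) \<le> dist X Y"
proof -
  have "(norm (\<gamma> X - \<gamma> Y))\<^sup>2 = (norm (\<gamma> X))\<^sup>2 + (norm (\<gamma> Y))\<^sup>2 - 2 * inner (\<gamma> X) (\<gamma> Y)"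
    by (simp add: power2_norm_eq_inner inner_diff_left inner_diff_right inner_commute)
  also have "\<dots> \<le> (norm X)\<^sup>2 + (norm Y)\<^sup>2 - 2 * inner X Y" using nm ip[of X Y] by simp
  also have "\<dots> = (norm (X - Y))\<^sup>2"
    by (simp add: power2_norm_eq_inner inner_diff_left inner_diff_right inner_commute)
  finally have "(norm (\<gamma> X - \<gamma> Y))\<^sup>2 \<le> (norm (X - Y))\<^sup>2" .
  then have "norm (\<gamma> X - \<gamma> Y) \<le> norm (X - Y)"
    using power2_le_imp_le norm_ge_zero by blast
  then show ?thesis by (simp add: dist_norm)
qed

lemma lip_isCont:
  assumes "\<And>X Y. dist (f X) (f Y) \<le> dist X Y"
  shows "isCont f x"
  unfolding isCont_def
proof (rule tendstoI)
  fix e :: real assume "e > 0"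
  then show "\<forall>\<^sub>F y in at x. dist (f y) (f x) < e"
    unfolding eventually_at
    using assms le_less_trans by blast
qed

theorem proposition4p5:
  fixes S :: "('x::euclidean_space \<Rightarrow> 'x) set"
    and \<gamma> :: "'h::euclidean_space \<Rightarrow> 'x"
    and A :: "'a set"
    and \<Lambda> :: "'a \<Rightarrow> 'x \<Rightarrow> 'h"
    and \<phi> :: "'x \<Rightarrow> ereal"
  assumes "spectral_decomposition_system S \<gamma> A \<Lambda>"
    and "S_invariant S \<phi>"
  shows "lsc_envelope (\<phi> \<circ> \<gamma>) = lsc_envelope \<phi> \<circ> \<gamma>
         \<and> (\<forall>X. lsc_at (\<phi> \<circ> \<gamma>) X \<longleftrightarrow> lsc_at \<phi> (\<gamma> X))
         \<and> (lsc (\<phi> \<circ> \<gamma>) \<longleftrightarrow> lsc \<phi>)"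
proof -
  note D = assms(1)[unfolded spectral_decomposition_system_def]
  have lin: "\<And>a. a \<in> A \<Longrightarrow> linear (\<Lambda> a)" and iso: "\<And>a x. a \<in> A \<Longrightarrow> norm (\<Lambda> a x) = norm x"
    using D by auto
  obtain \<tau> where tinv: "\<And>x. \<tau> x \<in> orbit S x" and tg: "\<And>a. a \<in> A \<Longrightarrow> \<gamma> \<circ> \<Lambda> a = \<tau>"
    using D by blast
  have dec: "\<And>X. \<exists>a\<in>A. X = \<Lambda> a (\<gamma> X)" using D by blast
  have ip: "\<And>X Y. inner X Y \<le> inner (\<gamma> X) (\<gamma> Y)" using D by blast
  have nm: "\<And>X. norm (\<gamma> X) = norm X"
    using dec iso by metis
  have gc: "\<And>X. isCont \<gamma> X" by (rule lip_isCont, rule gamma_lip[OF nm ip])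
  have Lc: "\<And>a x. a \<in> A \<Longrightarrow> isCont (\<Lambda> a) x"
    using lin by (simp add: linear_continuous_at linear_conv_bounded_linear)
  have phit: "\<And>x. \<phi> (\<tau> x) = \<phi> x"
  proof -
    fix x
    obtain s where "s \<in> S" "\<tau> x = s x" using tinv[of x] unfolding orbit_def by blast
    then show "\<phi> (\<tau> x) = \<phi> x" using assms(2) unfolding S_invariant_def by simp
  qed
  have key: "\<And>a. a \<in> A \<Longrightarrow> (\<phi> \<circ> \<gamma>) \<circ> \<Lambda> a = \<phi>"
  proof
    fix a x assume "a \<in> A"
    then show "((\<phi> \<circ> \<gamma>) \<circ> \<Lambda> a) x = \<phi> x"
      using tg[of a] phit by (metis comp_apply)
  qed
  obtain a0 where a0: "a0 \<in> A" using dec by blast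
  have ii: "\<forall>X. lsc_at (\<phi> \<circ> \<gamma>) X \<longleftrightarrow> lsc_at \<phi> (\<gamma> X)"
  proof (intro allI iffI)
    fix X assume h: "lsc_at (\<phi> \<circ> \<gamma>) X"
    obtain a where a: "a \<in> A" "X = \<Lambda> a (\<gamma> X)" using dec by blast
    have "lsc_at ((\<phi> \<circ> \<gamma>) \<circ> \<Lambda> a) (\<gamma> X)"
      using lsc_at_comp[of "\<phi> \<circ> \<gamma>" "\<Lambda> a" "\<gamma> X"] h a Lc by simp
    then show "lsc_at \<phi> (\<gamma> X)" using key[OF a(1)] by simp
  next
    fix X assume "lsc_at \<phi> (\<gamma> X)"
    then show "lsc_at (\<phi> \<circ> \<gamma>) X" using lsc_at_comp gc by blast
  qed
  have iii: "lsc (\<phi> \<circ> \<gamma>) \<longleftrightarrow> lsc \<phi>"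
  proof
    assume "lsc (\<phi> \<circ> \<gamma>)"
    then have "lsc ((\<phi> \<circ> \<gamma>) \<circ> \<Lambda> a0)" using lsc_comp Lc[OF a0] by blast
    then show "lsc \<phi>" using key[OF a0] by simp
  next
    assume "lsc \<phi>" then show "lsc (\<phi> \<circ> \<gamma>)" using lsc_comp gc by blast
  qed
  have i: "lsc_envelope (\<phi> \<circ> \<gamma>) = lsc_envelope \<phi> \<circ> \<gamma>"
  proof
    fix X
    show "lsc_envelope (\<phi> \<circ> \<gamma>) X = (lsc_envelope \<phi> \<circ> \<gamma>) X"
      unfolding comp_apply[of "lsc_envelope \<phi>"] lsc_envelope_def
    proof (rule antisym)
      show "(SUP h\<in>{g. lsc g \<and> (\<forall>y. g y \<le> (\<phi> \<circ> \<gamma>) y)}. h X)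
            \<le> (SUP g\<in>{g. lsc g \<and> (\<forall>y. g y \<le> \<phi> y)}. g (\<gamma> X))"
      proof (rule SUP_least)
        fix h assume h: "h \<in> {g. lsc g \<and> (\<forall>y. g y \<le> (\<phi> \<circ> \<gamma>) y)}"
        obtain a where a: "a \<in> A" "X = \<Lambda> a (\<gamma> X)" using dec by blast
        have "h \<circ> \<Lambda> a \<in> {g. lsc g \<and> (\<forall>y. g y \<le> \<phi> y)}"
        proof -
          have "lsc (h \<circ> \<Lambda> a)" using h lsc_comp Lc[OF a(1)] by blast
          moreover have "\<forall>y. (h \<circ> \<Lambda> a) y \<le> \<phi> y"
          proof
            fix y
            have "h (\<Lambda> a y) \<le> (\<phi> \<circ> \<gamma>) (\<Lambda> a y)" using h by blast
            also have "\<dots> = \<phi> y" using key[OF a(1)] by (metis comp_apply)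
            finally show "(h \<circ> \<Lambda> a) y \<le> \<phi> y" by simp
          qed
          ultimately show ?thesis by blast
        qed
        then have "(h \<circ> \<Lambda> a) (\<gamma> X) \<le> (SUP g\<in>{g. lsc g \<and> (\<forall>y. g y \<le> \<phi> y)}. g (\<gamma> X))"
          by (rule SUP_upper)
        then show "h X \<le> (SUP g\<in>{g. lsc g \<and> (\<forall>y. g y \<le> \<phi> y)}. g (\<gamma> X))"
          using a(2) by (metis comp_apply)
      qed
    next
      show "(SUP g\<in>{g. lsc g \<and> (\<forall>y. g y \<le> \<phi> y)}. g (\<gamma> X))
            \<le> (SUP h\<in>{g. lsc g \<and> (\<forall>y. g y \<le> (\<phi> \<circ> \<gamma>) y)}. h X)"
      proof (rule SUP_least)
        fix g assume g: "g \<in> {g. lsc g \<and> (\<forall>y. g y \<le> \<phi> y)}"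
        have "g \<circ> \<gamma> \<in> {g. lsc g \<and> (\<forall>y. g y \<le> (\<phi> \<circ> \<gamma>) y)}"
          using g lsc_comp gc by auto
        then have "(g \<circ> \<gamma>) X \<le> (SUP h\<in>{g. lsc g \<and> (\<forall>y. g y \<le> (\<phi> \<circ> \<gamma>) y)}. h X)"
          by (rule SUP_upper)
        then show "g (\<gamma> X) \<le> (SUP h\<in>{g. lsc g \<and> (\<forall>y. g y \<le> (\<phi> \<circ> \<gamma>) y)}. h X)" by simp
      qed
    qed
  qed
  show ?thesis using i ii iii by blast
qed

end
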